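(* Let $(X,\mu)$ be a $\sigma$-finite measure space, let $S:L^1(X)\to L^1(X)$ be a semi-doubly stochastic operator, and let $F$ be a finite dimensional subspace of $L^1(X)$. Then there exists a sequence $(I_n)_{n\ge1}$ of semi-doubly stochastic integral operators on $L^1(X)$ which converges to $S$ on $F$, i.e. $\|I_nf-Sf\|_1\to0$ for every $f\in F$.
   Context: A semi-doubly stochastic operator is a positive linear operator $T:L^1(X)\to L^1(X)$ with $\int_X Tf\,d\mu=\int_X f\,d\mu$ for all $f\in L^1(X)$ and $\int_X T^*\chi_E\,d\mu\le\mu(E)$ for every measurable $E$ with $\mu(E)<\infty$, where $T^*:L^\infty(X)\to L^\infty(X)$ is the Banach adjoint. A semi-doubly stochastic kernel is a measurable function $K:X\times X\to[0,\infty)$ with $\int_X K(x,y)\,d\mu(x)=1$ for almost all $y$ and $\int_X K(x,y)\,d\mu(y)\le1$ for almost all $x$. A semi-doubly stochastic integral operator is an operator of the form $(If)(x)=\int_X K(x,y)f(y)\,d\mu(y)$ with $K$ a semi-doubly stochastic kernel. *)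

theory Defs
  imports "HOL-Analysis.Analysis"
begin

text \<open>Elements of L^1(X) are represented by integrable real functions; an operator on
L^1(X) is a map on functions which sends integrable functions to integrable ones
and respects almost-everywhere equality.\<close>

definition L1_operator :: "'a measure \<Rightarrow> (('a \<Rightarrow> real) \<Rightarrow> ('a \<Rightarrow> real)) \<Rightarrow> bool" where
  "L1_operator M T \<longleftrightarrow>
     (\<forall>f. integrable M f \<longrightarrow> integrable M (T f)) \<and>
     (\<forall>f g. integrable M f \<longrightarrow> integrable M g \<longrightarrow> (AE x in M. f x = g x) \<longrightarrow>
            (AE x in M. T f x = T g x))"

definition L1_linear :: "'a measure \<Rightarrow> (('a \<Rightarrow> real) \<Rightarrow> ('a \<Rightarrow> real)) \<Rightarrow> bool" where
  "L1_linear M T \<longleftrightarrow>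
     (\<forall>f g a b. integrable M f \<longrightarrow> integrable M g \<longrightarrow>
        (AE x in M. T (\<lambda>y. a * f y + b * g y) x = a * T f x + b * T g x))"

definition L1_positive :: "'a measure \<Rightarrow> (('a \<Rightarrow> real) \<Rightarrow> ('a \<Rightarrow> real)) \<Rightarrow> bool" where
  "L1_positive M T \<longleftrightarrow>
     (\<forall>f. integrable M f \<longrightarrow> (AE x in M. 0 \<le> f x) \<longrightarrow> (AE x in M. 0 \<le> T f x))"

text \<open>g represents the Banach adjoint applied to h:
  \<open>T^* h = g\<close> in L^\<infinity>.\<close>
definition adjoint_value ::
  "'a measure \<Rightarrow> (('a \<Rightarrow> real) \<Rightarrow> ('a \<Rightarrow> real)) \<Rightarrow> ('a \<Rightarrow> real) \<Rightarrow> ('a \<Rightarrow> real) \<Rightarrow> bool" where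
  "adjoint_value M T h g \<longleftrightarrow>
     g \<in> borel_measurable M \<and> (\<exists>C. AE x in M. \<bar>g x\<bar> \<le> C) \<and>
     (\<forall>f. integrable M f \<longrightarrow> (\<integral>x. T f x * h x \<partial>M) = (\<integral>x. f x * g x \<partial>M))"

definition semi_doubly_stochastic_op ::
  "'a measure \<Rightarrow> (('a \<Rightarrow> real) \<Rightarrow> ('a \<Rightarrow> real)) \<Rightarrow> bool" where
  "semi_doubly_stochastic_op M T \<longleftrightarrow>
     L1_operator M T \<and> L1_linear M T \<and> L1_positive M T \<and>
     (\<forall>f. integrable M f \<longrightarrow> (\<integral>x. T f x \<partial>M) = (\<integral>x. f x \<partial>M)) \<and>
     (\<forall>E \<in> sets M. emeasure M E < \<infinity> \<longrightarrow>
        (\<exists>g. adjoint_value M T (indicator E) g \<and>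
             (\<integral>\<^sup>+x. ennreal (g x) \<partial>M) \<le> emeasure M E))"

definition semi_doubly_stochastic_kernel :: "'a measure \<Rightarrow> ('a \<Rightarrow> 'a \<Rightarrow> real) \<Rightarrow> bool" where
  "semi_doubly_stochastic_kernel M K \<longleftrightarrow>
     (\<lambda>(x, y). K x y) \<in> borel_measurable (M \<Otimes>\<^sub>M M) \<and>
     (\<forall>x y. 0 \<le> K x y) \<and>
     (AE y in M. (\<integral>\<^sup>+x. ennreal (K x y) \<partial>M) = 1) \<and>
     (AE x in M. (\<integral>\<^sup>+y. ennreal (K x y) \<partial>M) \<le> 1)"

definition integral_operator :: "'a measure \<Rightarrow> ('a \<Rightarrow> 'a \<Rightarrow> real) \<Rightarrow> ('a \<Rightarrow> real) \<Rightarrow> ('a \<Rightarrow> real)" where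
  "integral_operator M K f = (\<lambda>x. \<integral>y. K x y * f y \<partial>M)"

definition finite_dim_L1_subspace :: "'a measure \<Rightarrow> ('a \<Rightarrow> real) set \<Rightarrow> bool" where
  "finite_dim_L1_subspace M F \<longleftrightarrow>
     (\<exists>(N::nat) fs. (\<forall>i<N. integrable M (fs i)) \<and>
        F = {(\<lambda>x. \<Sum>i<N. c i * fs i x) | c. True})"

end

theory Submission
  imports Defs
begin

lemma kernel_contr:
  assumes sf: "sigma_finite_measure M" and K: "semi_doubly_stochastic_kernel M K"
    and h: "integrable M h"
  shows "(\<integral>\<^sup>+x. ennreal \<bar>integral_operator M K h x\<bar> \<partial>M) \<le> (\<integral>\<^sup>+x. ennreal \<bar>h x\<bar> \<partial>M)"
proof -
  interpret pair_sigma_finite M M using sf by (simp add: pair_sigma_finite_def)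
  have Km[measurable]: "(\<lambda>(x, y). K x y) \<in> borel_measurable (M \<Otimes>\<^sub>M M)"
    and Kpos: "\<And>x y. 0 \<le> K x y"
    and col: "AE y in M. (\<integral>\<^sup>+x. ennreal (K x y) \<partial>M) = 1"
    using K unfolding semi_doubly_stochastic_kernel_def by auto
  have hm[measurable]: "h \<in> borel_measurable M" using h by auto
  have m2: "(\<lambda>(x,y). ennreal (K x y * \<bar>h y\<bar>)) \<in> borel_measurable (M \<Otimes>\<^sub>M M)"
    by measurable
  have "(\<integral>\<^sup>+x. ennreal \<bar>integral_operator M K h x\<bar> \<partial>M)
      \<le> (\<integral>\<^sup>+x. (\<integral>\<^sup>+y. ennreal (K x y * \<bar>h y\<bar>) \<partial>M) \<partial>M)"
  proof (rule nn_integral_mono)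
    fix x
    show "ennreal \<bar>integral_operator M K h x\<bar> \<le> (\<integral>\<^sup>+y. ennreal (K x y * \<bar>h y\<bar>) \<partial>M)"
    proof (cases "integrable M (\<lambda>y. K x y * h y)")
      case True
      have "ennreal \<bar>integral_operator M K h x\<bar> \<le> (\<integral>\<^sup>+y. norm (K x y * h y) \<partial>M)"
        using integral_norm_bound_ennreal[OF True] by (simp add: integral_operator_def)
      also have "\<dots> = (\<integral>\<^sup>+y. ennreal (K x y * \<bar>h y\<bar>) \<partial>M)"
        using Kpos by (simp add: abs_mult)
      finally show ?thesis .
    next
      case False
      then show ?thesis by (simp add: integral_operator_def not_integrable_integral_eq)
    qed
  qed
  also have "\<dots> = (\<integral>\<^sup>+y. (\<integral>\<^sup>+x. ennreal (K x y * \<bar>h y\<bar>) \<partial>M) \<partial>M)"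
    using Fubini'[OF m2] by simp
  also have "\<dots> = (\<integral>\<^sup>+y. ennreal \<bar>h y\<bar> * (\<integral>\<^sup>+x. ennreal (K x y) \<partial>M) \<partial>M)"
    by (intro nn_integral_cong) (simp add: ennreal_mult Kpos nn_integral_cmult[symmetric] mult.commute)
  also have "\<dots> = (\<integral>\<^sup>+y. ennreal \<bar>h y\<bar> \<partial>M)"
    using col by (intro nn_integral_cong_AE) auto
  finally show ?thesis .
qed

lemma sdso_props:
  assumes "semi_doubly_stochastic_op M S"
  shows sdso_int: "\<And>f. integrable M f \<Longrightarrow> integrable M (S f)"
    and sdso_cong: "\<And>f g. integrable M f \<Longrightarrow> integrable M g \<Longrightarrow> (AE x in M. f x = g x) \<Longrightarrow>
            (AE x in M. S f x = S g x)"
    and sdso_lin: "\<And>f g a b. integrable M f \<Longrightarrow> integrable M g \<Longrightarrow>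
        (AE x in M. S (\<lambda>y. a * f y + b * g y) x = a * S f x + b * S g x)"
    and sdso_pos: "\<And>f. integrable M f \<Longrightarrow> (AE x in M. 0 \<le> f x) \<Longrightarrow> (AE x in M. 0 \<le> S f x)"
    and sdso_integral: "\<And>f. integrable M f \<Longrightarrow> (\<integral>x. S f x \<partial>M) = (\<integral>x. f x \<partial>M)"
    and sdso_adj: "\<And>E. E \<in> sets M \<Longrightarrow> emeasure M E < \<infinity> \<Longrightarrow>
        (\<exists>g. adjoint_value M S (indicator E) g \<and> (\<integral>\<^sup>+x. ennreal (g x) \<partial>M) \<le> emeasure M E)"
proof -
  note d = assms[unfolded semi_doubly_stochastic_op_def]
  from d have o: "L1_operator M S" and l: "L1_linear M S" and p: "L1_positive M S"
    by simp_all
  show "\<And>f. integrable M f \<Longrightarrow> integrable M (S f)" using o unfolding L1_operator_def by simp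
  show "\<And>f g. integrable M f \<Longrightarrow> integrable M g \<Longrightarrow> (AE x in M. f x = g x) \<Longrightarrow>
            (AE x in M. S f x = S g x)" using o unfolding L1_operator_def by simp
  show "\<And>f g a b. integrable M f \<Longrightarrow> integrable M g \<Longrightarrow>
        (AE x in M. S (\<lambda>y. a * f y + b * g y) x = a * S f x + b * S g x)"
    using l unfolding L1_linear_def by simp
  show "\<And>f. integrable M f \<Longrightarrow> (AE x in M. 0 \<le> f x) \<Longrightarrow> (AE x in M. 0 \<le> S f x)"
    using p unfolding L1_positive_def by simp
  show "\<And>f. integrable M f \<Longrightarrow> (\<integral>x. S f x \<partial>M) = (\<integral>x. f x \<partial>M)"
    using d by simp
  show "\<And>E. E \<in> sets M \<Longrightarrow> emeasure M E < \<infinity> \<Longrightarrow>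
        (\<exists>g. adjoint_value M S (indicator E) g \<and> (\<integral>\<^sup>+x. ennreal (g x) \<partial>M) \<le> emeasure M E)"
    using d by simp
qed

lemma sdso_zero:
  assumes "semi_doubly_stochastic_op M S"
  shows "AE x in M. S (\<lambda>y. 0) x = 0"
  using sdso_lin[OF assms, of "\<lambda>y. 0" "\<lambda>y. 0" 0 0] by simp

lemma sdso_sum:
  fixes n :: nat and f :: "nat \<Rightarrow> 'a \<Rightarrow> real"
  assumes S: "semi_doubly_stochastic_op M S" and f: "\<And>i. i < n \<Longrightarrow> integrable M (f i)"
  shows "AE x in M. S (\<lambda>y. \<Sum>i<n. c i * f i y) x = (\<Sum>i<n. c i * S (f i) x)"
proof -
  have "(\<forall>i<m. integrable M (f i)) \<longrightarrow> (AE x in M. S (\<lambda>y. \<Sum>i<m. c i * f i y) x = (\<Sum>i<m. c i * S (f i) x))" for m :: nat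
  proof (induction m)
    case 0
    then show ?case using sdso_zero[OF S] by simp
  next
    case (Suc n)
    show ?case
    proof
      assume pr: "\<forall>i<Suc n. integrable M (f i)"
      have i1: "integrable M (\<lambda>y. \<Sum>i<n. c i * f i y)" by (intro Bochner_Integration.integrable_sum Bochner_Integration.integrable_mult_right) (use pr in auto)
      have i2: "integrable M (f n)" using pr by auto
      have e: "(\<lambda>y. \<Sum>i<Suc n. c i * f i y) = (\<lambda>y. 1 * (\<Sum>i<n. c i * f i y) + c n * f n y)"
        by simp
      show "AE x in M. S (\<lambda>y. \<Sum>i<Suc n. c i * f i y) x = (\<Sum>i<Suc n. c i * S (f i) x)"
      proof -
        have ih: "AE x in M. S (\<lambda>y. \<Sum>i<n. c i * f i y) x = (\<Sum>i<n. c i * S (f i) x)"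
          using Suc.IH pr by (simp add: less_Suc_eq)
        have lin: "AE x in M. S (\<lambda>y. 1 * (\<Sum>i<n. c i * f i y) + c n * f n y) x = 1 * S (\<lambda>y. \<Sum>i<n. c i * f i y) x + c n * S (f n) x"
          by (rule sdso_lin[OF S i1 i2])
        show ?thesis unfolding e
        proof (rule AE_mp[OF ih], rule AE_mp[OF lin], rule AE_I2, intro impI)
          fix x
          assume h1: "S (\<lambda>y. 1 * (\<Sum>i<n. c i * f i y) + c n * f n y) x = 1 * S (\<lambda>y. \<Sum>i<n. c i * f i y) x + c n * S (f n) x"
            and h2: "S (\<lambda>y. \<Sum>i<n. c i * f i y) x = (\<Sum>i<n. c i * S (f i) x)"
          show "S (\<lambda>y. 1 * (\<Sum>i<n. c i * f i y) + c n * f n y) x = (\<Sum>i<Suc n. c i * S (f i) x)"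
            unfolding h1 h2 sum.lessThan_Suc by simp
        qed
      qed
    qed
  qed
  then show ?thesis using f by blast
qed

lemma sdso_diff:
  assumes S: "semi_doubly_stochastic_op M S" and f: "integrable M f" and g: "integrable M g"
  shows "AE x in M. S (\<lambda>y. f y - g y) x = S f x - S g x"
  using sdso_lin[OF S f g, of 1 "-1"] by simp

lemma sdso_contr:
  assumes S: "semi_doubly_stochastic_op M S" and h: "integrable M h"
  shows "(\<integral>\<^sup>+x. ennreal \<bar>S h x\<bar> \<partial>M) \<le> (\<integral>\<^sup>+x. ennreal \<bar>h x\<bar> \<partial>M)"
proof -
  have ha: "integrable M (\<lambda>y. \<bar>h y\<bar>)" using h by auto
  have i1: "integrable M (\<lambda>y. 1 * \<bar>h y\<bar> + -1 * h y)" "integrable M (\<lambda>y. 1 * \<bar>h y\<bar> + 1 * h y)"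
    using h by auto
  have p1: "AE x in M. 0 \<le> S (\<lambda>y. 1 * \<bar>h y\<bar> + -1 * h y) x"
    by (rule sdso_pos[OF S i1(1)]) auto
  have p2: "AE x in M. 0 \<le> S (\<lambda>y. 1 * \<bar>h y\<bar> + 1 * h y) x"
    by (rule sdso_pos[OF S i1(2)]) auto
  have le: "AE x in M. \<bar>S h x\<bar> \<le> S (\<lambda>y. \<bar>h y\<bar>) x"
    using p1 p2 sdso_lin[OF S ha h, of 1 "-1"] sdso_lin[OF S ha h, of 1 1]
    by eventually_elim auto
  have "(\<integral>\<^sup>+x. ennreal \<bar>S h x\<bar> \<partial>M) \<le> (\<integral>\<^sup>+x. ennreal (S (\<lambda>y. \<bar>h y\<bar>) x) \<partial>M)"
    using le by (intro nn_integral_mono_AE) (auto elim!: eventually_mono)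
  also have "\<dots> = ennreal (\<integral>x. S (\<lambda>y. \<bar>h y\<bar>) x \<partial>M)"
    using le by (intro nn_integral_eq_integral sdso_int[OF S ha]) (auto elim!: eventually_mono)
  also have "\<dots> = ennreal (\<integral>x. \<bar>h x\<bar> \<partial>M)"
    using sdso_integral[OF S ha] by simp
  also have "\<dots> = (\<integral>\<^sup>+x. ennreal \<bar>h x\<bar> \<partial>M)"
    using ha by (intro nn_integral_eq_integral[symmetric]) auto
  finally show ?thesis .
qed

definition cellp :: "'a measure \<Rightarrow> (nat \<Rightarrow> 'a set) \<Rightarrow> bool" where
  "cellp M C \<longleftrightarrow> (\<forall>k. C k \<in> sets M) \<and> disjoint_family C \<and> (\<Union>k. C k) = space M \<and>
     (\<forall>k. emeasure M (C k) < \<infinity>)"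

definition cidx :: "(nat \<Rightarrow> 'a set) \<Rightarrow> 'a \<Rightarrow> nat" where
  "cidx C x = (LEAST k. x \<in> C k)"

lemma cellp_sets: "cellp M C \<Longrightarrow> C k \<in> sets M"
  and cellp_disj: "cellp M C \<Longrightarrow> disjoint_family C"
  and cellp_UN: "cellp M C \<Longrightarrow> (\<Union>k. C k) = space M"
  and cellp_fin: "cellp M C \<Longrightarrow> emeasure M (C k) < \<infinity>"
  unfolding cellp_def by auto

lemma cellp_sub: "cellp M C \<Longrightarrow> C k \<subseteq> space M"
  using cellp_UN by blast

lemma cidx_eq: assumes "cellp M C" "x \<in> C k" shows "cidx C x = k"
proof -
  have "(LEAST k. x \<in> C k) = k"
  proof (rule Least_equality)
    show "x \<in> C k" by fact
    fix y assume "x \<in> C y"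
    then have "y = k" using cellp_disj[OF assms(1)] assms(2) unfolding disjoint_family_on_def by blast
    then show "k \<le> y" by simp
  qed
  then show ?thesis unfolding cidx_def .
qed

lemma cidx_in: assumes "cellp M C" "x \<in> space M" shows "x \<in> C (cidx C x)"
proof -
  obtain k where "x \<in> C k" using cellp_UN[OF assms(1)] assms(2) by blast
  then show ?thesis using cidx_eq[OF assms(1)] by simp
qed

lemma cidx_iff: assumes "cellp M C" "x \<in> space M" shows "x \<in> C k \<longleftrightarrow> cidx C x = k"
  using cidx_eq[OF assms(1)] cidx_in[OF assms] by blast

lemma cidx_meas: assumes "cellp M C" shows "cidx C \<in> measurable M (count_space UNIV)"
proof (subst measurable_count_space_eq2_countable, safe)
  fix k :: nat
  have "cidx C -` {k} \<inter> space M = C k"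
    using cidx_iff[OF assms] cellp_sub[OF assms] by blast
  then show "cidx C -` {k} \<inter> space M \<in> sets M" using cellp_sets[OF assms] by simp
qed auto

lemma cfun_meas:
  assumes "cellp M C" shows "(\<lambda>x. \<phi> (cidx C x)) \<in> borel_measurable M"
proof -
  have "(\<lambda>x. (\<lambda>i x. \<phi> i) (cidx C x) x) \<in> borel_measurable M"
    by (rule measurable_compose_countable[OF _ cidx_meas[OF assms]]) (rule measurable_const, simp)
  then show ?thesis by simp
qed

lemma ckern_meas:
  assumes "cellp M C"
  shows "(\<lambda>(x, y). \<kappa> (cidx C x) (cidx C y) :: real) \<in> borel_measurable (M \<Otimes>\<^sub>M M)"
proof -
  have m1: "(\<lambda>z. cidx C (fst z)) \<in> measurable (M \<Otimes>\<^sub>M M) (count_space UNIV)"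
    using cidx_meas[OF assms] by measurable
  have m2: "(\<lambda>z. cidx C (snd z)) \<in> measurable (M \<Otimes>\<^sub>M M) (count_space UNIV)"
    using cidx_meas[OF assms] by measurable
  have "(\<lambda>z. (\<lambda>i z. \<kappa> i (cidx C (snd z))) (cidx C (fst z)) z) \<in> borel_measurable (M \<Otimes>\<^sub>M M)"
  proof (rule measurable_compose_countable[OF _ m1])
    fix i
    show "(\<lambda>z. \<kappa> i (cidx C (snd z))) \<in> borel_measurable (M \<Otimes>\<^sub>M M)"
      using measurable_compose_countable[OF _ m2, of "\<lambda>j z. \<kappa> i j" borel] by simp
  qed
  then show ?thesis by (simp add: case_prod_beta)
qed

lemma nn_part:
  assumes "cellp M C" and F: "F \<in> borel_measurable M"
  shows "(\<integral>\<^sup>+x. F x \<partial>M) = (\<Sum>l. \<integral>\<^sup>+x. F x * indicator (C l) x \<partial>M)"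
proof -
  have "(\<integral>\<^sup>+x. F x \<partial>M) = (\<integral>\<^sup>+x. (\<Sum>l. F x * indicator (C l) x) \<partial>M)"
  proof (rule nn_integral_cong)
    fix x assume x: "x \<in> space M"
    have "(\<Sum>l. F x * indicator (C l) x) = (\<Sum>l\<in>{cidx C x}. F x * indicator (C l) x)"
      by (rule suminf_finite) (use cidx_iff[OF assms(1) x] in auto)
    also have "\<dots> = F x" using cidx_in[OF assms(1) x] by simp
    finally show "F x = (\<Sum>l. F x * indicator (C l) x)" by simp
  qed
  also have "\<dots> = (\<Sum>l. \<integral>\<^sup>+x. F x * indicator (C l) x \<partial>M)"
    by (rule nn_integral_suminf) (use F cellp_sets[OF assms(1)] in measurable)
  finally show ?thesis .
qed

lemma nn_cell:
  assumes "cellp M C"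
  shows "(\<integral>\<^sup>+x. \<phi> (cidx C x) \<partial>M) = (\<Sum>l. \<phi> l * emeasure M (C l))"
proof -
  have "(\<integral>\<^sup>+x. \<phi> (cidx C x) \<partial>M) = (\<Sum>l. \<integral>\<^sup>+x. \<phi> (cidx C x) * indicator (C l) x \<partial>M)"
    by (rule nn_part[OF assms cfun_meas[OF assms]])
  also have "\<dots> = (\<Sum>l. \<integral>\<^sup>+x. \<phi> l * indicator (C l) x \<partial>M)"
  proof (intro suminf_cong nn_integral_cong)
    fix l x assume "x \<in> space M"
    then show "\<phi> (cidx C x) * indicator (C l) x = \<phi> l * indicator (C l) x"
      using cidx_iff[OF assms] by (auto split: split_indicator)
  qed
  also have "\<dots> = (\<Sum>l. \<phi> l * emeasure M (C l))"
    using cellp_sets[OF assms] by (simp add: nn_integral_cmult_indicator)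
  finally show ?thesis .
qed

lemma ae_cellpos:
  assumes "cellp M C"
  shows "AE x in M. emeasure M (C (cidx C x)) \<noteq> 0"
proof (rule AE_I')
  show "(\<Union>l\<in>{l. emeasure M (C l) = 0}. C l) \<in> null_sets M"
    using cellp_sets[OF assms] by (intro null_sets_UN') (auto simp: null_sets_def)
  show "{x \<in> space M. \<not> emeasure M (C (cidx C x)) \<noteq> 0} \<subseteq> (\<Union>l\<in>{l. emeasure M (C l) = 0}. C l)"
    using cidx_in[OF assms] by auto
qed

lemma cell_sdsk:
  assumes cp: "cellp M C" and pos: "\<And>l j. 0 \<le> \<kappa> l j"
    and col: "\<And>j. emeasure M (C j) \<noteq> 0 \<Longrightarrow> (\<Sum>l. ennreal (\<kappa> l j) * emeasure M (C l)) = 1"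
    and row: "\<And>l. emeasure M (C l) \<noteq> 0 \<Longrightarrow> (\<Sum>j. ennreal (\<kappa> l j) * emeasure M (C j)) \<le> 1"
  shows "semi_doubly_stochastic_kernel M (\<lambda>x y. \<kappa> (cidx C x) (cidx C y))"
  unfolding semi_doubly_stochastic_kernel_def
proof (intro conjI allI)
  show "(\<lambda>(x, y). \<kappa> (cidx C x) (cidx C y)) \<in> borel_measurable (M \<Otimes>\<^sub>M M)"
    by (rule ckern_meas[OF cp])
  show "\<And>x y. 0 \<le> \<kappa> (cidx C x) (cidx C y)" by (rule pos)
  show "AE y in M. (\<integral>\<^sup>+x. ennreal (\<kappa> (cidx C x) (cidx C y)) \<partial>M) = 1"
    using ae_cellpos[OF cp]
  proof eventually_elim
    case (elim y)
    have "(\<integral>\<^sup>+x. ennreal (\<kappa> (cidx C x) (cidx C y)) \<partial>M) = (\<Sum>l. ennreal (\<kappa> l (cidx C y)) * emeasure M (C l))"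
      by (rule nn_cell[OF cp])
    then show ?case using col[OF elim] by (rule trans)
  qed
  show "AE x in M. (\<integral>\<^sup>+y. ennreal (\<kappa> (cidx C x) (cidx C y)) \<partial>M) \<le> 1"
    using ae_cellpos[OF cp]
  proof eventually_elim
    case (elim x)
    have "(\<integral>\<^sup>+y. ennreal (\<kappa> (cidx C x) (cidx C y)) \<partial>M) = (\<Sum>j. ennreal (\<kappa> (cidx C x) j) * emeasure M (C j))"
      by (rule nn_cell[OF cp])
    then show ?case using row[OF elim] by (rule ord_eq_le_trans)
  qed
qed

lemma cell_integrable:
  fixes f :: "'a \<Rightarrow> real" and \<kappa> :: "nat \<Rightarrow> nat \<Rightarrow> real"
  assumes cp: "cellp M C" and f: "integrable M f" and B: "\<And>j. \<bar>\<kappa> l j\<bar> \<le> B"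
  shows "integrable M (\<lambda>y. \<kappa> l (cidx C y) * f y)"
proof (rule Bochner_Integration.integrable_bound[where f="\<lambda>y. B * f y"])
  show "integrable M (\<lambda>y. B * f y)" using f by simp
  show "(\<lambda>y. \<kappa> l (cidx C y) * f y) \<in> borel_measurable M"
    using cfun_meas[OF cp, of "\<kappa> l"] f by measurable
  have "0 \<le> B" using B[of 0] by linarith
  show "AE x in M. norm (\<kappa> l (cidx C x) * f x) \<le> norm (B * f x)"
    using B \<open>0 \<le> B\<close> by (auto simp: abs_mult intro!: mult_right_mono)
qed

lemma cell_op_sum:
  fixes f :: "nat \<Rightarrow> 'a \<Rightarrow> real"
  assumes cp: "cellp M C" and f: "\<And>i. i < N \<Longrightarrow> integrable M (f i)"
    and B: "\<And>l. \<exists>B. \<forall>j. \<bar>\<kappa> l j\<bar> \<le> B"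
  shows "integral_operator M (\<lambda>x y. \<kappa> (cidx C x) (cidx C y)) (\<lambda>y. \<Sum>i<N. c i * f i y) x
       = (\<Sum>i<N. c i * integral_operator M (\<lambda>x y. \<kappa> (cidx C x) (cidx C y)) (f i) x)"
proof -
  obtain b where b: "\<forall>j. \<bar>\<kappa> (cidx C x) j\<bar> \<le> b" using B by blast
  have ii: "integrable M (\<lambda>y. \<kappa> (cidx C x) (cidx C y) * f i y)" if "i < N" for i
    using cell_integrable[OF cp f[OF that], of \<kappa> "cidx C x" b] b by blast
  have "integral_operator M (\<lambda>x y. \<kappa> (cidx C x) (cidx C y)) (\<lambda>y. \<Sum>i<N. c i * f i y) x
      = (\<integral>y. (\<Sum>i<N. c i * (\<kappa> (cidx C x) (cidx C y) * f i y)) \<partial>M)"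
    unfolding integral_operator_def by (simp add: sum_distrib_left mult_ac)
  also have "\<dots> = (\<Sum>i<N. c i * integral_operator M (\<lambda>x y. \<kappa> (cidx C x) (cidx C y)) (f i) x)"
    unfolding integral_operator_def
    by (subst Bochner_Integration.integral_sum) (use ii in auto)
  finally show ?thesis .
qed

lemma cell_op_diff:
  assumes cp: "cellp M C" and f: "integrable M f" and g: "integrable M g"
    and B: "\<And>l. \<exists>B. \<forall>j. \<bar>\<kappa> l j\<bar> \<le> B"
  shows "integral_operator M (\<lambda>x y. \<kappa> (cidx C x) (cidx C y)) (\<lambda>y. f y - g y) x
       = integral_operator M (\<lambda>x y. \<kappa> (cidx C x) (cidx C y)) f x
         - integral_operator M (\<lambda>x y. \<kappa> (cidx C x) (cidx C y)) g x"
proof -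
  obtain b where b: "\<forall>j. \<bar>\<kappa> (cidx C x) j\<bar> \<le> b" using B by blast
  show ?thesis
    unfolding integral_operator_def
    using cell_integrable[OF cp f, of \<kappa> "cidx C x" b] cell_integrable[OF cp g, of \<kappa> "cidx C x" b] b
    by (simp add: right_diff_distrib)
qed

lemma cell_eval:
  assumes cp: "cellp M C" and x: "x \<in> space M"
    and g: "\<And>y. y \<in> space M \<Longrightarrow> g y = (\<Sum>j<n. \<gamma> j * indicator (C j) y)"
  shows "integral_operator M (\<lambda>x y. \<kappa> (cidx C x) (cidx C y)) g x
       = (\<Sum>j<n. \<gamma> j * \<kappa> (cidx C x) j * measure M (C j))"
proof -
  have "integral_operator M (\<lambda>x y. \<kappa> (cidx C x) (cidx C y)) g x
      = (\<integral>y. (\<Sum>j<n. \<gamma> j * \<kappa> (cidx C x) j * indicator (C j) y) \<partial>M)"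
    unfolding integral_operator_def
  proof (rule Bochner_Integration.integral_cong[OF refl])
    fix y assume y: "y \<in> space M"
    have "\<kappa> (cidx C x) (cidx C y) * g y = (\<Sum>j<n. \<gamma> j * (\<kappa> (cidx C x) (cidx C y) * indicator (C j) y))"
      unfolding g[OF y] sum_distrib_left by (intro sum.cong refl) (simp add: mult_ac)
    also have "\<dots> = (\<Sum>j<n. \<gamma> j * \<kappa> (cidx C x) j * indicator (C j) y)"
      by (intro sum.cong refl) (use cidx_iff[OF cp y] in \<open>auto split: split_indicator\<close>)
    finally show "\<kappa> (cidx C x) (cidx C y) * g y = (\<Sum>j<n. \<gamma> j * \<kappa> (cidx C x) j * indicator (C j) y)" .
  qed
  also have "\<dots> = (\<Sum>j<n. \<gamma> j * \<kappa> (cidx C x) j * measure M (C j))"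
    using cellp_sets[OF cp] cellp_fin[OF cp] cellp_sub[OF cp]
    by (subst Bochner_Integration.integral_sum) (auto simp: Int_absorb2)
  finally show ?thesis .
qed

lemma ennreal_integral_le:
  fixes f :: "'a \<Rightarrow> real"
  shows "ennreal (\<integral>x. f x \<partial>M) \<le> (\<integral>\<^sup>+x. ennreal (f x) \<partial>M)"
proof (cases "integrable M f")
  case True
  have "(\<integral>x. f x \<partial>M) \<le> (\<integral>x. max 0 (f x) \<partial>M)"
    using True by (intro integral_mono) auto
  then have "ennreal (\<integral>x. f x \<partial>M) \<le> ennreal (\<integral>x. max 0 (f x) \<partial>M)"
    by (rule ennreal_leI)
  also have "\<dots> = (\<integral>\<^sup>+x. ennreal (max 0 (f x)) \<partial>M)"
    using True by (intro nn_integral_eq_integral[symmetric]) auto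
  also have "\<dots> = (\<integral>\<^sup>+x. ennreal (f x) \<partial>M)"
    by (simp add: ennreal_max_0)
  finally show ?thesis .
next
  case False
  then show ?thesis by (simp add: not_integrable_integral_eq)
qed

lemma tri:
  fixes p q r :: "'a \<Rightarrow> real"
  assumes [measurable]: "p \<in> borel_measurable M" "q \<in> borel_measurable M" "r \<in> borel_measurable M"
  shows "(\<integral>\<^sup>+x. ennreal \<bar>p x - r x\<bar> \<partial>M) \<le> (\<integral>\<^sup>+x. ennreal \<bar>p x - q x\<bar> \<partial>M) + (\<integral>\<^sup>+x. ennreal \<bar>q x - r x\<bar> \<partial>M)"
proof -
  have "(\<integral>\<^sup>+x. ennreal \<bar>p x - r x\<bar> \<partial>M) \<le> (\<integral>\<^sup>+x. ennreal \<bar>p x - q x\<bar> + ennreal \<bar>q x - r x\<bar> \<partial>M)"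
    by (intro nn_integral_mono) (simp add: ennreal_plus[symmetric] del: ennreal_plus)
  also have "\<dots> = (\<integral>\<^sup>+x. ennreal \<bar>p x - q x\<bar> \<partial>M) + (\<integral>\<^sup>+x. ennreal \<bar>q x - r x\<bar> \<partial>M)"
    by (intro nn_integral_add) auto
  finally show ?thesis .
qed

lemma cell_op_meas:
  assumes "cellp M C"
  shows "integral_operator M (\<lambda>x y. \<kappa> (cidx C x) (cidx C y)) f \<in> borel_measurable M"
proof -
  have "integral_operator M (\<lambda>x y. \<kappa> (cidx C x) (cidx C y)) f = (\<lambda>x. (\<lambda>l. \<integral>y. \<kappa> l (cidx C y) * f y \<partial>M) (cidx C x))"
    unfolding integral_operator_def by simp
  then show ?thesis using cfun_meas[OF assms] by simp
qed

context
  fixes M :: "'a measure" and S :: "('a \<Rightarrow> real) \<Rightarrow> ('a \<Rightarrow> real)" and C :: "nat \<Rightarrow> 'a set"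
  assumes S: "semi_doubly_stochastic_op M S" and cp: "cellp M C"
begin

definition "mu k = measure M (C k)"
definition "aa l j = (\<integral>x. indicator (C l) x * S (indicator (C j)) x \<partial>M)"

lemma emeasure_C: "emeasure M (C k) = ennreal (mu k)"
  unfolding mu_def by (intro emeasure_eq_ennreal_measure) (use cellp_fin[OF cp, of k] in auto)

lemma mu_nonneg: "0 \<le> mu k" unfolding mu_def by simp

lemma int_ind: "integrable M (indicator (C j) :: 'a \<Rightarrow> real)"
  using cellp_sets[OF cp] cellp_fin[OF cp] by simp

lemma S_ind_pos: "AE x in M. 0 \<le> S (indicator (C j)) x"
  by (rule sdso_pos[OF S int_ind]) auto

lemma int_ind_S: "integrable M (\<lambda>x. indicator (C l) x * S (indicator (C j)) x)"
  using integrable_mult_indicator[OF cellp_sets[OF cp] sdso_int[OF S int_ind], of l j] by simp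

lemma aa_nonneg: "0 \<le> aa l j"
  unfolding aa_def using S_ind_pos[of j] by (intro integral_nonneg_AE) (auto elim!: eventually_mono)

lemma aa_le: "aa l j \<le> mu j"
proof -
  have "aa l j \<le> (\<integral>x. S (indicator (C j)) x \<partial>M)"
    unfolding aa_def using S_ind_pos[of j]
    by (intro integral_mono_AE int_ind_S sdso_int[OF S int_ind])
       (auto elim!: eventually_mono split: split_indicator)
  also have "\<dots> = mu j"
    using sdso_integral[OF S int_ind, of j] cellp_sub[OF cp] unfolding mu_def
    by (simp add: Int_absorb2)
  finally show ?thesis .
qed

lemma aa_null_l: assumes "mu l = 0" shows "aa l j = 0"
proof -
  have "emeasure M (C l) = 0" using emeasure_C[of l] assms by simp
  then have "AE x in M. x \<notin> C l" using cellp_sets[OF cp] by (intro AE_I'[of "C l"]) auto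
  then have "AE x in M. indicator (C l) x * S (indicator (C j)) x = 0"
    by (auto elim!: eventually_mono)
  then show ?thesis unfolding aa_def by (simp add: integral_eq_zero_AE)
qed

lemma aa_null_j: assumes "mu j = 0" shows "aa l j = 0"
proof -
  have "emeasure M (C j) = 0" using emeasure_C[of j] assms by simp
  then have "AE x in M. x \<notin> C j" using cellp_sets[OF cp] by (intro AE_I'[of "C j"]) auto
  then have "AE x in M. indicator (C j) x = (0::real)"
    by (auto elim!: eventually_mono)
  then have h1: "AE x in M. S (indicator (C j)) x = S (\<lambda>y. 0) x"
    by (intro sdso_cong[OF S int_ind]) auto
  have h2: "AE x in M. S (\<lambda>y. 0) x = 0" by (rule sdso_zero[OF S])
  from h1 h2 have "AE x in M. indicator (C l) x * S (indicator (C j)) x = 0"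
    by eventually_elim simp
  then show ?thesis unfolding aa_def by (simp add: integral_eq_zero_AE)
qed

lemma col_sum: "(\<Sum>l. ennreal (aa l j)) = ennreal (mu j)"
proof -
  have "(\<Sum>l. ennreal (aa l j)) = (\<Sum>l. \<integral>\<^sup>+x. ennreal (S (indicator (C j)) x) * indicator (C l) x \<partial>M)"
  proof (intro suminf_cong)
    fix l
    have "ennreal (aa l j) = (\<integral>\<^sup>+x. ennreal (indicator (C l) x * S (indicator (C j)) x) \<partial>M)"
      unfolding aa_def using S_ind_pos[of j]
      by (intro nn_integral_eq_integral[symmetric] int_ind_S) (auto elim!: eventually_mono)
    also have "\<dots> = (\<integral>\<^sup>+x. ennreal (S (indicator (C j)) x) * indicator (C l) x \<partial>M)"
      by (intro nn_integral_cong) (auto split: split_indicator)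
    finally show "ennreal (aa l j) = \<dots>" .
  qed
  also have "\<dots> = (\<integral>\<^sup>+x. ennreal (S (indicator (C j)) x) \<partial>M)"
    using sdso_int[OF S int_ind, of j]
    by (intro nn_part[OF cp, symmetric]) auto
  also have "\<dots> = ennreal (\<integral>x. S (indicator (C j)) x \<partial>M)"
    using S_ind_pos[of j] by (intro nn_integral_eq_integral sdso_int[OF S int_ind])
  also have "\<dots> = ennreal (mu j)"
    using sdso_integral[OF S int_ind, of j] cellp_sub[OF cp] unfolding mu_def
    by (simp add: Int_absorb2)
  finally show ?thesis .
qed

lemma row_sum: "(\<Sum>j. ennreal (aa l j)) \<le> ennreal (mu l)"
proof -
  obtain g where adj: "adjoint_value M S (indicator (C l)) g"
    and gle: "(\<integral>\<^sup>+x. ennreal (g x) \<partial>M) \<le> emeasure M (C l)"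
    using sdso_adj[OF S cellp_sets[OF cp] cellp_fin[OF cp]] by blast
  have adjeq: "\<And>f. integrable M f \<Longrightarrow> (\<integral>x. S f x * indicator (C l) x \<partial>M) = (\<integral>x. f x * g x \<partial>M)"
    using adj unfolding adjoint_value_def by blast
  show ?thesis
  proof (rule suminf_le_const)
    show "summable (\<lambda>j. ennreal (aa l j))" by simp
    fix n
    define U where "U = (\<lambda>y. \<Sum>j<n. 1 * (indicator (C j) y :: real))"
    have Uint: "integrable M U" unfolding U_def using int_ind
      by (intro Bochner_Integration.integrable_sum Bochner_Integration.integrable_mult_right) auto
    have U01: "0 \<le> U x \<and> U x \<le> 1" if x: "x \<in> space M" for x
    proof -
      have "U x = (\<Sum>j<n. if j = cidx C x then 1 else 0)"
        unfolding U_def using cidx_iff[OF cp x] by (intro sum.cong) (auto split: split_indicator)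
      then show ?thesis by auto
    qed
    have SU: "AE x in M. S U x = (\<Sum>j<n. 1 * S (indicator (C j)) x)"
      unfolding U_def by (rule sdso_sum[OF S int_ind])
    have "(\<Sum>j<n. aa l j) = (\<integral>x. (\<Sum>j<n. indicator (C l) x * S (indicator (C j)) x) \<partial>M)"
      unfolding aa_def by (subst Bochner_Integration.integral_sum) (use int_ind_S in auto)
    also have "\<dots> = (\<integral>x. S U x * indicator (C l) x \<partial>M)"
    proof (rule integral_cong_AE)
      show "(\<lambda>x. \<Sum>j<n. indicator (C l) x * S (indicator (C j)) x) \<in> borel_measurable M"
        using int_ind_S by (intro borel_measurable_sum) auto
      show "(\<lambda>x. S U x * indicator (C l) x) \<in> borel_measurable M"
        using integrable_real_mult_indicator[OF cellp_sets[OF cp] sdso_int[OF S Uint]] by auto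
      from SU show "AE x in M. (\<Sum>j<n. indicator (C l) x * S (indicator (C j)) x) = S U x * indicator (C l) x"
        by eventually_elim (simp only: sum_distrib_left[symmetric] mult_1_left mult.commute)
    qed
    also have "\<dots> = (\<integral>x. U x * g x \<partial>M)" by (rule adjeq[OF Uint])
    finally have eq: "(\<Sum>j<n. aa l j) = (\<integral>x. U x * g x \<partial>M)" .
    have "(\<Sum>j<n. ennreal (aa l j)) = ennreal (\<Sum>j<n. aa l j)"
      using aa_nonneg by simp
    also have "\<dots> \<le> (\<integral>\<^sup>+x. ennreal (U x * g x) \<partial>M)"
      unfolding eq by (rule ennreal_integral_le)
    also have "\<dots> \<le> (\<integral>\<^sup>+x. ennreal (g x) \<partial>M)"
    proof (rule nn_integral_mono)
      fix x assume x: "x \<in> space M"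
      show "ennreal (U x * g x) \<le> ennreal (g x)"
      proof (cases "0 \<le> g x")
        case True
        then show ?thesis using U01[OF x] by (intro ennreal_leI) (simp add: mult_left_le_one_le)
      next
        case False
        then have "U x * g x \<le> 0" using U01[OF x] by (simp add: mult_nonneg_nonpos)
        then have "ennreal (U x * g x) = 0" by (simp add: ennreal_eq_0_iff)
        then show ?thesis by simp
      qed
    qed
    also have "\<dots> \<le> ennreal (mu l)" using gle emeasure_C by simp
    finally show "(\<Sum>j<n. ennreal (aa l j)) \<le> ennreal (mu l)" .
  qed
qed


definition "kS l j = aa l j / (mu l * mu j)"
definition "kQ l j = (if l = j then 1 / mu l else 0)"

lemma kS_nonneg: "0 \<le> kS l j"
  unfolding kS_def using aa_nonneg mu_nonneg by simp

lemma kS_bound: "\<bar>kS l j\<bar> \<le> 1 / mu l"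
proof (cases "mu j = 0")
  case True
  then show ?thesis using mu_nonneg by (simp add: kS_def)
next
  case False
  then have "0 < mu j" using mu_nonneg[of j] by simp
  have "kS l j = aa l j / mu j / mu l" unfolding kS_def by (simp add: divide_divide_eq_left mult.commute)
  also have "\<dots> \<le> 1 / mu l"
    using aa_le[of l j] aa_nonneg[of l j] \<open>0 < mu j\<close> mu_nonneg[of l]
    by (intro divide_right_mono) (auto simp: divide_le_eq)
  finally show ?thesis using kS_nonneg by simp
qed

lemma kQ_bound: "\<bar>kQ l j\<bar> \<le> 1 / mu l"
  unfolding kQ_def using mu_nonneg by simp

lemma kS_mu: "kS l j * mu l = aa l j * (1 / mu j)"
proof (cases "mu l = 0")
  case True then show ?thesis using aa_null_l by simp
next
  case False then show ?thesis unfolding kS_def by (simp add: field_simps)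
qed

lemma kS_mu': "kS l j * mu j = aa l j / mu l"
proof (cases "mu j = 0")
  case True then show ?thesis using aa_null_j by simp
next
  case False then show ?thesis unfolding kS_def by (cases "mu l = 0") (simp_all add: field_simps)
qed

lemma mu_pos_iff: "emeasure M (C j) \<noteq> 0 \<longleftrightarrow> mu j \<noteq> 0"
  using emeasure_C[of j] mu_nonneg[of j] by simp

lemma kS_sdsk: "semi_doubly_stochastic_kernel M (\<lambda>x y. kS (cidx C x) (cidx C y))"
proof (rule cell_sdsk[OF cp kS_nonneg])
  fix j assume "emeasure M (C j) \<noteq> 0"
  then have mj: "0 < mu j" using mu_pos_iff mu_nonneg[of j] by simp
  have "(\<Sum>l. ennreal (kS l j) * emeasure M (C l)) = (\<Sum>l. ennreal (aa l j) * ennreal (1 / mu j))"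
    unfolding emeasure_C
    by (intro suminf_cong) (simp add: ennreal_mult[symmetric] kS_nonneg mu_nonneg aa_nonneg kS_mu)
  also have "\<dots> = ennreal (mu j) * ennreal (1 / mu j)"
    using col_sum[of j] by simp
  also have "\<dots> = 1" using mj by (simp add: ennreal_mult[symmetric])
  finally show "(\<Sum>l. ennreal (kS l j) * emeasure M (C l)) = 1" .
next
  fix l assume "emeasure M (C l) \<noteq> 0"
  then have ml: "0 < mu l" using mu_pos_iff mu_nonneg[of l] by simp
  have "(\<Sum>j. ennreal (kS l j) * emeasure M (C j)) = (\<Sum>j. ennreal (aa l j) * ennreal (1 / mu l))"
    unfolding emeasure_C
    by (intro suminf_cong) (simp add: ennreal_mult[symmetric] kS_nonneg mu_nonneg aa_nonneg kS_mu' divide_inverse)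
  also have "\<dots> = (\<Sum>j. ennreal (aa l j)) * ennreal (1 / mu l)"
    by simp
  also have "\<dots> \<le> ennreal (mu l) * ennreal (1 / mu l)"
    using row_sum[of l] by (intro mult_right_mono) auto
  also have "\<dots> = 1" using ml by (simp add: ennreal_mult[symmetric])
  finally show "(\<Sum>j. ennreal (kS l j) * emeasure M (C j)) \<le> 1" .
qed

lemma kQ_sum: "mu j \<noteq> 0 \<Longrightarrow> (\<Sum>l. ennreal (kQ l j) * emeasure M (C l)) = 1"
  and kQ_sum': "mu l \<noteq> 0 \<Longrightarrow> (\<Sum>j. ennreal (kQ l j) * emeasure M (C j)) = 1"
proof -
  assume "mu j \<noteq> 0"
  then have mj: "0 < mu j" using mu_nonneg[of j] by simp
  have "(\<Sum>l. ennreal (kQ l j) * emeasure M (C l)) = (\<Sum>l\<in>{j}. ennreal (kQ l j) * emeasure M (C l))"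
    by (rule suminf_finite) (auto simp: kQ_def)
  also have "\<dots> = 1" using mj by (simp add: kQ_def emeasure_C ennreal_mult[symmetric])
  finally show "(\<Sum>l. ennreal (kQ l j) * emeasure M (C l)) = 1" .
next
  assume "mu l \<noteq> 0"
  then have ml: "0 < mu l" using mu_nonneg[of l] by simp
  have "(\<Sum>j. ennreal (kQ l j) * emeasure M (C j)) = (\<Sum>j\<in>{l}. ennreal (kQ l j) * emeasure M (C j))"
    by (rule suminf_finite) (auto simp: kQ_def)
  also have "\<dots> = 1" using ml by (simp add: kQ_def emeasure_C ennreal_mult[symmetric])
  finally show "(\<Sum>j. ennreal (kQ l j) * emeasure M (C j)) = 1" .
qed

lemma kQ_sdsk: "semi_doubly_stochastic_kernel M (\<lambda>x y. kQ (cidx C x) (cidx C y))"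
proof (rule cell_sdsk[OF cp])
  show "\<And>l j. 0 \<le> kQ l j" unfolding kQ_def using mu_nonneg by simp
  show "\<And>j. emeasure M (C j) \<noteq> 0 \<Longrightarrow> (\<Sum>l. ennreal (kQ l j) * emeasure M (C l)) = 1"
    using kQ_sum mu_pos_iff by blast
  show "\<And>l. emeasure M (C l) \<noteq> 0 \<Longrightarrow> (\<Sum>j. ennreal (kQ l j) * emeasure M (C j)) \<le> 1"
    using kQ_sum' mu_pos_iff by fastforce
qed

lemma IQ_eval:
  assumes x: "x \<in> space M"
  shows "integral_operator M (\<lambda>x y. kQ (cidx C x) (cidx C y)) h x
       = (\<integral>y. indicator (C (cidx C x)) y * h y \<partial>M) / mu (cidx C x)"
proof -
  have "integral_operator M (\<lambda>x y. kQ (cidx C x) (cidx C y)) h x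
      = (\<integral>y. indicator (C (cidx C x)) y * h y / mu (cidx C x) \<partial>M)"
    unfolding integral_operator_def
  proof (rule Bochner_Integration.integral_cong[OF refl])
    fix y assume y: "y \<in> space M"
    show "kQ (cidx C x) (cidx C y) * h y = indicator (C (cidx C x)) y * h y / mu (cidx C x)"
      using cidx_iff[OF cp y] unfolding kQ_def by (auto split: split_indicator)
  qed
  also have "\<dots> = (\<integral>y. indicator (C (cidx C x)) y * h y \<partial>M) / mu (cidx C x)"
    by (rule integral_divide_zero)
  finally show ?thesis .
qed

lemma rep_int:
  fixes g :: "'a \<Rightarrow> real"
  assumes g: "\<And>y. y \<in> space M \<Longrightarrow> g y = (\<Sum>j<n. \<gamma> j * indicator (C j) y)"
  shows "integrable M g"
proof -
  have "integrable M (\<lambda>y. \<Sum>j<n. \<gamma> j * indicator (C j) y)"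
    by (intro Bochner_Integration.integrable_sum) (simp add: int_ind)
  moreover have "integrable M g \<longleftrightarrow> integrable M (\<lambda>y. \<Sum>j<n. \<gamma> j * indicator (C j) y)"
    by (rule Bochner_Integration.integrable_cong[OF refl]) (simp add: g)
  ultimately show ?thesis by simp
qed

lemma IS_eq_IQS:
  assumes x: "x \<in> space M"
    and g: "\<And>y. y \<in> space M \<Longrightarrow> g y = (\<Sum>j<n. \<gamma> j * indicator (C j) y)"
  shows "integral_operator M (\<lambda>x y. kS (cidx C x) (cidx C y)) g x
       = integral_operator M (\<lambda>x y. kQ (cidx C x) (cidx C y)) (S g) x"
proof -
  define l where "l = cidx C x"
  have "integral_operator M (\<lambda>x y. kS (cidx C x) (cidx C y)) g x = (\<Sum>j<n. \<gamma> j * kS l j * mu j)"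
    unfolding l_def mu_def by (rule cell_eval[OF cp x g])
  also have "\<dots> = (\<Sum>j<n. \<gamma> j * aa l j) / mu l"
    by (simp add: sum_divide_distrib kS_mu' mult.assoc)
  also have "(\<Sum>j<n. \<gamma> j * aa l j) = (\<integral>y. indicator (C l) y * S g y \<partial>M)"
  proof -
    have gi: "integrable M g" by (rule rep_int[OF g])
    have i2: "integrable M (\<lambda>y. \<Sum>j<n. \<gamma> j * indicator (C j) y)"
      by (intro Bochner_Integration.integrable_sum) (simp add: int_ind)
    have e1: "AE y in M. S g y = S (\<lambda>y. \<Sum>j<n. \<gamma> j * indicator (C j) y) y"
      using g by (intro sdso_cong[OF S gi i2]) auto
    have e2: "AE y in M. S (\<lambda>y. \<Sum>j<n. \<gamma> j * indicator (C j) y) y = (\<Sum>j<n. \<gamma> j * S (indicator (C j)) y)"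
      by (rule sdso_sum[OF S int_ind])
    have "(\<integral>y. indicator (C l) y * S g y \<partial>M) = (\<integral>y. (\<Sum>j<n. \<gamma> j * (indicator (C l) y * S (indicator (C j)) y)) \<partial>M)"
    proof (rule integral_cong_AE)
      show "(\<lambda>y. indicator (C l) y * S g y) \<in> borel_measurable M"
        using integrable_real_mult_indicator[OF cellp_sets[OF cp] sdso_int[OF S gi]]
        by (auto simp: mult.commute)
      have "integrable M (\<lambda>y. \<Sum>j<n. \<gamma> j * (indicator (C l) y * S (indicator (C j)) y))"
        by (intro Bochner_Integration.integrable_sum) (simp add: int_ind_S)
      then show "(\<lambda>y. \<Sum>j<n. \<gamma> j * (indicator (C l) y * S (indicator (C j)) y)) \<in> borel_measurable M"
        by auto
      from e1 e2 show "AE y in M. indicator (C l) y * S g y = (\<Sum>j<n. \<gamma> j * (indicator (C l) y * S (indicator (C j)) y))"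
        by eventually_elim (simp add: sum_distrib_left mult_ac)
    qed
    also have "\<dots> = (\<Sum>j<n. \<gamma> j * aa l j)"
      unfolding aa_def by (subst Bochner_Integration.integral_sum) (use int_ind_S in auto)
    finally show ?thesis by simp
  qed
  also have "(\<integral>y. indicator (C l) y * S g y \<partial>M) / mu l
      = integral_operator M (\<lambda>x y. kQ (cidx C x) (cidx C y)) (S g) x"
    unfolding l_def by (rule IQ_eval[OF x, symmetric])
  finally show ?thesis .
qed

lemma IQ_simple:
  assumes x: "x \<in> space M" and mx: "mu (cidx C x) \<noteq> 0"
    and u: "\<And>y. y \<in> space M \<Longrightarrow> u y = (\<Sum>j<n. \<gamma> j * indicator (C j) y)"
  shows "integral_operator M (\<lambda>x y. kQ (cidx C x) (cidx C y)) u x = u x"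
proof -
  define l where "l = cidx C x"
  have "integral_operator M (\<lambda>x y. kQ (cidx C x) (cidx C y)) u x = (\<Sum>j<n. \<gamma> j * kQ l j * mu j)"
    unfolding l_def mu_def by (rule cell_eval[OF cp x u])
  also have "\<dots> = (\<Sum>j<n. if j = l then \<gamma> j else 0)"
    using mx unfolding l_def by (intro sum.cong refl) (simp add: kQ_def)
  also have "\<dots> = (\<Sum>j<n. \<gamma> j * indicator (C j) x)"
    using cidx_iff[OF cp x] unfolding l_def by (intro sum.cong refl) (auto split: split_indicator)
  also have "\<dots> = u x" using u[OF x] by simp
  finally show ?thesis .
qed

lemma approx_err:
  assumes sf: "sigma_finite_measure M" and f: "integrable M f"
    and g: "\<And>y. y \<in> space M \<Longrightarrow> g y = (\<Sum>j<n. \<gamma> j * indicator (C j) y)"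
    and u: "\<And>y. y \<in> space M \<Longrightarrow> u y = (\<Sum>j<n. \<gamma>' j * indicator (C j) y)"
    and d: "0 \<le> \<delta>"
    and fg: "(\<integral>\<^sup>+x. ennreal \<bar>f x - g x\<bar> \<partial>M) \<le> ennreal \<delta>"
    and ug: "(\<integral>\<^sup>+x. ennreal \<bar>S g x - u x\<bar> \<partial>M) \<le> ennreal \<delta>"
  shows "(\<integral>\<^sup>+x. ennreal \<bar>integral_operator M (\<lambda>x y. kS (cidx C x) (cidx C y)) f x - S f x\<bar> \<partial>M)
         \<le> ennreal (4 * \<delta>)"
proof -
  let ?IS = "integral_operator M (\<lambda>x y. kS (cidx C x) (cidx C y))"
  let ?IQ = "integral_operator M (\<lambda>x y. kQ (cidx C x) (cidx C y))"
  have gi: "integrable M g" by (rule rep_int[OF g])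
  have ui: "integrable M u" by (rule rep_int[OF u])
  have Sgi: "integrable M (S g)" by (rule sdso_int[OF S gi])
  have Sfi: "integrable M (S f)" by (rule sdso_int[OF S f])
  have m: "?IS f \<in> borel_measurable M" "?IS g \<in> borel_measurable M"
     "?IQ (S g) \<in> borel_measurable M" "?IQ u \<in> borel_measurable M"
    by (rule cell_op_meas[OF cp])+
  have m2: "u \<in> borel_measurable M" "S g \<in> borel_measurable M" "S f \<in> borel_measurable M"
    using ui Sgi Sfi by auto
  have BS: "\<And>l. \<exists>B. \<forall>j. \<bar>kS l j\<bar> \<le> B" using kS_bound by blast
  have BQ: "\<And>l. \<exists>B. \<forall>j. \<bar>kQ l j\<bar> \<le> B" using kQ_bound by blast
  have T1: "(\<integral>\<^sup>+x. ennreal \<bar>?IS f x - ?IS g x\<bar> \<partial>M) \<le> ennreal \<delta>"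
  proof -
    have "(\<integral>\<^sup>+x. ennreal \<bar>?IS f x - ?IS g x\<bar> \<partial>M) = (\<integral>\<^sup>+x. ennreal \<bar>?IS (\<lambda>y. f y - g y) x\<bar> \<partial>M)"
      using cell_op_diff[OF cp f gi, of kS, OF BS] by simp
    also have "\<dots> \<le> (\<integral>\<^sup>+x. ennreal \<bar>f x - g x\<bar> \<partial>M)"
      by (rule kernel_contr[OF sf kS_sdsk]) (use f gi in auto)
    finally show ?thesis using fg by simp
  qed
  have T2: "(\<integral>\<^sup>+x. ennreal \<bar>?IS g x - ?IQ (S g) x\<bar> \<partial>M) = 0"
  proof -
    have "(\<integral>\<^sup>+x. ennreal \<bar>?IS g x - ?IQ (S g) x\<bar> \<partial>M) = (\<integral>\<^sup>+x. 0 \<partial>M)"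
      by (intro nn_integral_cong) (simp add: IS_eq_IQS[OF _ g])
    then show ?thesis by simp
  qed
  have T3: "(\<integral>\<^sup>+x. ennreal \<bar>?IQ (S g) x - ?IQ u x\<bar> \<partial>M) \<le> ennreal \<delta>"
  proof -
    have "(\<integral>\<^sup>+x. ennreal \<bar>?IQ (S g) x - ?IQ u x\<bar> \<partial>M) = (\<integral>\<^sup>+x. ennreal \<bar>?IQ (\<lambda>y. S g y - u y) x\<bar> \<partial>M)"
      using cell_op_diff[OF cp Sgi ui, of kQ, OF BQ] by simp
    also have "\<dots> \<le> (\<integral>\<^sup>+x. ennreal \<bar>S g x - u x\<bar> \<partial>M)"
      by (rule kernel_contr[OF sf kQ_sdsk]) (use Sgi ui in auto)
    finally show ?thesis using ug by simp
  qed
  have T4: "(\<integral>\<^sup>+x. ennreal \<bar>?IQ u x - u x\<bar> \<partial>M) = 0"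
  proof -
    have "AE x in M. ennreal \<bar>?IQ u x - u x\<bar> = 0"
      using ae_cellpos[OF cp]
    proof (rule AE_mp, intro AE_I2 impI)
      fix x assume x: "x \<in> space M" and "emeasure M (C (cidx C x)) \<noteq> 0"
      then have "mu (cidx C x) \<noteq> 0" using mu_pos_iff by simp
      then show "ennreal \<bar>?IQ u x - u x\<bar> = 0" using IQ_simple[OF x _ u] by simp
    qed
    then have "(\<integral>\<^sup>+x. ennreal \<bar>?IQ u x - u x\<bar> \<partial>M) = (\<integral>\<^sup>+x. 0 \<partial>M)"
      by (rule nn_integral_cong_AE)
    then show ?thesis by simp
  qed
  have T5: "(\<integral>\<^sup>+x. ennreal \<bar>u x - S g x\<bar> \<partial>M) \<le> ennreal \<delta>"
    using ug by (simp add: abs_minus_commute)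
  have T6: "(\<integral>\<^sup>+x. ennreal \<bar>S g x - S f x\<bar> \<partial>M) \<le> ennreal \<delta>"
  proof -
    have "(\<integral>\<^sup>+x. ennreal \<bar>S g x - S f x\<bar> \<partial>M) = (\<integral>\<^sup>+x. ennreal \<bar>S (\<lambda>y. g y - f y) x\<bar> \<partial>M)"
      using sdso_diff[OF S gi f] by (intro nn_integral_cong_AE) (auto elim!: eventually_mono)
    also have "\<dots> \<le> (\<integral>\<^sup>+x. ennreal \<bar>g x - f x\<bar> \<partial>M)"
      by (rule sdso_contr[OF S]) (use f gi in auto)
    finally show ?thesis using fg by (simp add: abs_minus_commute)
  qed
  have H1: "(\<integral>\<^sup>+x. ennreal \<bar>?IS f x - S f x\<bar> \<partial>M)
      \<le> (\<integral>\<^sup>+x. ennreal \<bar>?IS f x - ?IS g x\<bar> \<partial>M) + (\<integral>\<^sup>+x. ennreal \<bar>?IS g x - S f x\<bar> \<partial>M)"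
    using m m2 by (intro tri) auto
  have H2: "(\<integral>\<^sup>+x. ennreal \<bar>?IS g x - S f x\<bar> \<partial>M)
      \<le> (\<integral>\<^sup>+x. ennreal \<bar>?IS g x - ?IQ (S g) x\<bar> \<partial>M) + (\<integral>\<^sup>+x. ennreal \<bar>?IQ (S g) x - S f x\<bar> \<partial>M)"
    using m m2 by (intro tri) auto
  have H3: "(\<integral>\<^sup>+x. ennreal \<bar>?IQ (S g) x - S f x\<bar> \<partial>M)
      \<le> (\<integral>\<^sup>+x. ennreal \<bar>?IQ (S g) x - ?IQ u x\<bar> \<partial>M) + (\<integral>\<^sup>+x. ennreal \<bar>?IQ u x - S f x\<bar> \<partial>M)"
    using m m2 by (intro tri) auto
  have H4: "(\<integral>\<^sup>+x. ennreal \<bar>?IQ u x - S f x\<bar> \<partial>M)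
      \<le> (\<integral>\<^sup>+x. ennreal \<bar>?IQ u x - u x\<bar> \<partial>M) + (\<integral>\<^sup>+x. ennreal \<bar>u x - S f x\<bar> \<partial>M)"
    using m m2 by (intro tri) auto
  have H5: "(\<integral>\<^sup>+x. ennreal \<bar>u x - S f x\<bar> \<partial>M)
      \<le> (\<integral>\<^sup>+x. ennreal \<bar>u x - S g x\<bar> \<partial>M) + (\<integral>\<^sup>+x. ennreal \<bar>S g x - S f x\<bar> \<partial>M)"
    using m m2 by (intro tri) auto
  have H5': "(\<integral>\<^sup>+x. ennreal \<bar>u x - S f x\<bar> \<partial>M) \<le> ennreal \<delta> + ennreal \<delta>"
    using H5 T5 T6 by (meson add_mono order_trans)
  have H4': "(\<integral>\<^sup>+x. ennreal \<bar>?IQ u x - S f x\<bar> \<partial>M) \<le> ennreal \<delta> + ennreal \<delta>"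
    using H4 H5' T4 by simp
  have H3': "(\<integral>\<^sup>+x. ennreal \<bar>?IQ (S g) x - S f x\<bar> \<partial>M) \<le> ennreal \<delta> + (ennreal \<delta> + ennreal \<delta>)"
    using H3 H4' T3 by (meson add_mono order_trans)
  have H2': "(\<integral>\<^sup>+x. ennreal \<bar>?IS g x - S f x\<bar> \<partial>M) \<le> ennreal \<delta> + (ennreal \<delta> + ennreal \<delta>)"
    using H2 H3' T2 by simp
  have "(\<integral>\<^sup>+x. ennreal \<bar>?IS f x - S f x\<bar> \<partial>M) \<le> ennreal \<delta> + (ennreal \<delta> + (ennreal \<delta> + ennreal \<delta>))"
    using H1 H2' T1 by (meson add_mono order_trans)
  also have "\<dots> = ennreal (4 * \<delta>)" using d by (simp add: ennreal_plus[symmetric] del: ennreal_plus)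
  finally show ?thesis .
qed
end

lemma simple_approx:
  fixes f :: "'a \<Rightarrow> real"
  assumes f: "integrable M f" and d: "0 < d"
  obtains s where "simple_function M s" "emeasure M {y\<in>space M. s y \<noteq> 0} \<noteq> \<infinity>"
    "(\<integral>\<^sup>+x. ennreal \<bar>f x - s x\<bar> \<partial>M) < ennreal d"
proof -
  from f obtain x where "has_bochner_integral M f x" by (auto elim: integrable.cases)
  then have "\<exists>s. (\<forall>i. Bochner_Integration.simple_bochner_integrable M (s i)) \<and> (\<lambda>i. \<integral>\<^sup>+x. norm (f x - s i x) \<partial>M) \<longlonglongrightarrow> 0"
    unfolding has_bochner_integral.simps by blast
  then obtain s where sb: "\<And>i. Bochner_Integration.simple_bochner_integrable M (s i)"
    and lim: "(\<lambda>i. \<integral>\<^sup>+x. norm (f x - s i x) \<partial>M) \<longlonglongrightarrow> 0"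
    by blast
  have "eventually (\<lambda>i. (\<integral>\<^sup>+x. norm (f x - s i x) \<partial>M) < ennreal d) sequentially"
    using order_tendstoD(2)[OF lim] d by simp
  then obtain i where "(\<integral>\<^sup>+x. norm (f x - s i x) \<partial>M) < ennreal d"
    by (auto simp: eventually_sequentially)
  moreover from sb[of i] have "simple_function M (s i)" "emeasure M {y\<in>space M. s i y \<noteq> 0} \<noteq> \<infinity>"
    by (auto elim: Bochner_Integration.simple_bochner_integrable.cases)
  ultimately show ?thesis using that[of "s i"] by simp
qed

lemma mk_cells:
  fixes s :: "nat \<Rightarrow> 'a \<Rightarrow> real"
  assumes sf: "sigma_finite_measure M"
    and s: "\<And>i. i < p \<Longrightarrow> simple_function M (s i)"
    and sfin: "\<And>i. i < p \<Longrightarrow> emeasure M {y\<in>space M. s i y \<noteq> 0} \<noteq> \<infinity>"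
  shows "\<exists>C \<gamma> n. cellp M C \<and>
    (\<forall>i y. i < p \<longrightarrow> y \<in> space M \<longrightarrow> s i y = (\<Sum>j<n. \<gamma> i j * indicator (C j) y))"
proof -
  define \<Phi> where "\<Phi> y = map (\<lambda>i. s i y) [0..<p]" for y
  define Z where "Z = replicate p (0::real)"
  define R where "R = (\<Union>i<p. s i ` space M)"
  have finR: "finite R" unfolding R_def using s by (auto simp: simple_function_def)
  define V where "V = \<Phi> ` space M - {Z}"
  have "V \<subseteq> {xs. set xs \<subseteq> R \<and> length xs = p}"
    unfolding V_def \<Phi>_def R_def by (fastforce intro: image_eqI)
  then have finV: "finite V" using finite_lists_length_eq[OF finR] by (rule finite_subset)
  define n where "n = card V"
  obtain e where e: "bij_betw e {..<n} V"
    using ex_bij_betw_nat_finite[OF finV] unfolding n_def atLeast0LessThan by blast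
  obtain A :: "nat \<Rightarrow> 'a set" where A: "range A \<subseteq> sets M" "(\<Union>i. A i) = space M"
    "\<And>i. emeasure M (A i) \<noteq> \<infinity>" "disjoint_family A"
    using sigma_finite_measure.sigma_finite_disjoint[OF sf] by metis
  define C where "C j = (if j < n then {y\<in>space M. \<Phi> y = e j} else {y\<in>space M. \<Phi> y = Z} \<inter> A (j - n))" for j
  have Phi_iff: "\<Phi> y = v \<longleftrightarrow> length v = p \<and> (\<forall>i<p. s i y = v ! i)" for y v
    unfolding \<Phi>_def by (auto simp: list_eq_iff_nth_eq)
  have sm: "\<And>i. i < p \<Longrightarrow> s i \<in> borel_measurable M"
    using s by (auto intro: borel_measurable_simple_function)
  have seteq: "{y\<in>space M. s i y = c} \<in> sets M" if "i < p" for i c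
  proof -
    note sm[OF that, measurable]
    show ?thesis by measurable
  qed
  have setsPhi: "{y\<in>space M. \<Phi> y = v} \<in> sets M" for v
  proof (cases "length v = p")
    case True
    have "{y\<in>space M. \<Phi> y = v} = space M \<inter> (\<Inter>i\<in>{..<p}. {y\<in>space M. s i y = v ! i})"
      using True unfolding Phi_iff by auto
    also have "\<dots> \<in> sets M"
    proof (cases "p = 0")
      case True then show ?thesis by simp
    next
      case False
      have "(\<Inter>i\<in>{..<p}. {y\<in>space M. s i y = v ! i}) \<in> sets M"
        using False by (intro sets.finite_INT) (auto intro: seteq)
      then show ?thesis by auto
    qed
    finally show ?thesis .
  next
    case False
    then have e0: "{y\<in>space M. \<Phi> y = v} = {}" unfolding Phi_iff by auto
    show ?thesis unfolding e0 by (rule sets.empty_sets)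
  qed
  have eV: "j < n \<Longrightarrow> e j \<in> V" for j using e by (auto simp: bij_betw_def)
  have einj: "j < n \<Longrightarrow> k < n \<Longrightarrow> e j = e k \<Longrightarrow> j = k" for j k
    using e by (auto simp: bij_betw_def inj_on_def)
  have eZ: "j < n \<Longrightarrow> e j \<noteq> Z" for j using eV unfolding V_def by auto
  have cp: "cellp M C"
    unfolding cellp_def
  proof (intro conjI allI)
    fix k
    show "C k \<in> sets M"
    proof (cases "k < n")
      case True then show ?thesis unfolding C_def using setsPhi by simp
    next
      case False then show ?thesis unfolding C_def using setsPhi A(1) by (simp add: sets.Int range_subsetD)
    qed
    show "emeasure M (C k) < \<infinity>"
    proof (cases "k < n")
      case True
      have sub: "C k \<subseteq> (\<Union>i\<in>{..<p}. {y\<in>space M. s i y \<noteq> 0})"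
      proof
        fix y assume y: "y \<in> C k"
        then have "\<Phi> y = e k" "y \<in> space M" using True unfolding C_def by auto
        moreover have "\<Phi> y \<noteq> Z" using eZ[OF True] \<open>\<Phi> y = e k\<close> by simp
        ultimately have "\<not> (\<forall>i<p. s i y = 0)"
          using Phi_iff[of y Z] unfolding Z_def by simp
        then obtain i where "i < p" "s i y \<noteq> 0" by blast
        then show "y \<in> (\<Union>i\<in>{..<p}. {y\<in>space M. s i y \<noteq> 0})" using \<open>y \<in> space M\<close> by auto
      qed
      have ms: "{y\<in>space M. s i y \<noteq> 0} \<in> sets M" if "i < p" for i
      proof -
        note sm[OF that, measurable]
        show ?thesis by measurable
      qed
      have "emeasure M (C k) \<le> emeasure M (\<Union>i\<in>{..<p}. {y\<in>space M. s i y \<noteq> 0})"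
        using sub ms by (intro emeasure_mono) auto
      also have "\<dots> \<le> (\<Sum>i<p. emeasure M {y\<in>space M. s i y \<noteq> 0})"
        using ms by (intro emeasure_subadditive_finite) auto
      also have "\<dots> < \<infinity>" using sfin by (simp add: less_top[symmetric])
      finally show ?thesis .
    next
      case False
      have "emeasure M (C k) \<le> emeasure M (A (k - n))"
        using False A(1) unfolding C_def by (intro emeasure_mono) auto
      also have "\<dots> < \<infinity>" using A(3) by (simp add: less_top[symmetric])
      finally show ?thesis .
    qed
  next
    show "disjoint_family C"
      unfolding disjoint_family_on_def
    proof (intro ballI impI)
      fix j k :: nat assume "j \<noteq> k"
      show "C j \<inter> C k = {}"
      proof (cases "j < n")
        case jn: True
        show ?thesis
        proof (cases "k < n")
          case True then show ?thesis
            using einj \<open>j \<noteq> k\<close> jn unfolding C_def by auto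
        next
          case False
          then have c1: "C j = {y\<in>space M. \<Phi> y = e j}" and c2: "C k = {y\<in>space M. \<Phi> y = Z} \<inter> A (k - n)"
            using jn by (simp_all add: C_def)
          have ne: "e j \<noteq> Z" using eZ jn by simp
          show ?thesis unfolding c1 c2 using ne by auto
        qed
      next
        case jn: False
        show ?thesis
        proof (cases "k < n")
          case True
          then have c1: "C k = {y\<in>space M. \<Phi> y = e k}" and c2: "C j = {y\<in>space M. \<Phi> y = Z} \<inter> A (j - n)"
            using jn by (simp_all add: C_def)
          have ne: "e k \<noteq> Z" using eZ True by simp
          show ?thesis unfolding c1 c2 using ne by auto
        next
          case False
          then have "j - n \<noteq> k - n" using \<open>j \<noteq> k\<close> jn by simp
          then have "A (j - n) \<inter> A (k - n) = {}" using A(4) unfolding disjoint_family_on_def by auto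
          then show ?thesis using False jn unfolding C_def by auto
        qed
      qed
    qed
  next
    show "(\<Union>k. C k) = space M"
    proof
      show "(\<Union>k. C k) \<subseteq> space M" unfolding C_def by auto
      show "space M \<subseteq> (\<Union>k. C k)"
      proof
        fix y assume y: "y \<in> space M"
        show "y \<in> (\<Union>k. C k)"
        proof (cases "\<Phi> y = Z")
          case True
          obtain m where "y \<in> A m" using A(2) y by blast
          then have "y \<in> C (n + m)" using True y unfolding C_def by auto
          then show ?thesis by blast
        next
          case False
          then have "\<Phi> y \<in> V" using y unfolding V_def by auto
          then obtain j where "j < n" "e j = \<Phi> y" using e unfolding bij_betw_def by auto
          then have "y \<in> C j" using y unfolding C_def by auto
          then show ?thesis by blast
        qed
      qed
    qed
  qed
  define \<gamma> where "\<gamma> i j = (if j < n then e j ! i else 0)" for i j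
  have rep: "s i y = (\<Sum>j<n. \<gamma> i j * indicator (C j) y)" if i: "i < p" and y: "y \<in> space M" for i y
  proof (cases "\<Phi> y = Z")
    case True
    have "\<forall>j<n. y \<notin> C j"
    proof (intro allI impI)
      fix j assume j: "j < n"
      have "e j \<noteq> Z" using eZ j by simp
      then show "y \<notin> C j" using True j unfolding C_def by simp
    qed
    then have "(\<Sum>j<n. \<gamma> i j * indicator (C j) y) = 0" by (intro sum.neutral) auto
    moreover have "s i y = 0" using True i unfolding Phi_iff Z_def by auto
    ultimately show ?thesis by simp
  next
    case False
    then have "\<Phi> y \<in> V" using y unfolding V_def by auto
    then obtain j0 where j0: "j0 < n" "e j0 = \<Phi> y" using e unfolding bij_betw_def by auto
    have "(\<Sum>j<n. \<gamma> i j * indicator (C j) y) = (\<Sum>j<n. if j = j0 then \<gamma> i j else 0)"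
    proof (intro sum.cong refl)
      fix j assume "j \<in> {..<n}"
      then show "\<gamma> i j * indicator (C j) y = (if j = j0 then \<gamma> i j else 0)"
        using j0 einj y unfolding C_def by (auto split: split_indicator)
    qed
    also have "\<dots> = \<gamma> i j0" using j0 by simp
    also have "\<dots> = s i y" using j0 i unfolding \<gamma>_def by (simp add: \<Phi>_def)
    finally show ?thesis by simp
  qed
  show ?thesis using cp rep by blast
qed

lemma simple_int:
  fixes s :: "'a \<Rightarrow> real"
  assumes "simple_function M s" "emeasure M {y\<in>space M. s y \<noteq> 0} \<noteq> \<infinity>"
  shows "integrable M s"
  by (rule integrableI_simple_bochner_integrable)
     (rule Bochner_Integration.simple_bochner_integrable.intros[OF assms])

lemma approx_main:
  fixes fs :: "nat \<Rightarrow> 'a \<Rightarrow> real"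
  assumes sf: "sigma_finite_measure M" and S: "semi_doubly_stochastic_op M S"
    and fi: "\<And>i. i < N \<Longrightarrow> integrable M (fs i)" and e: "0 < \<epsilon>"
  shows "\<exists>K. semi_doubly_stochastic_kernel M K \<and>
    (\<forall>c x. integral_operator M K (\<lambda>y. \<Sum>i<N. c i * fs i y) x = (\<Sum>i<N. c i * integral_operator M K (fs i) x)) \<and>
    (\<forall>i<N. integral_operator M K (fs i) \<in> borel_measurable M) \<and>
    (\<forall>i<N. (\<integral>\<^sup>+x. ennreal \<bar>integral_operator M K (fs i) x - S (fs i) x\<bar> \<partial>M) \<le> ennreal \<epsilon>)"
proof -
  define \<delta> where "\<delta> = \<epsilon> / 4"
  have d: "0 < \<delta>" using e by (simp add: \<delta>_def)
  have exS: "\<forall>i. \<exists>s. i < N \<longrightarrow> simple_function M s \<and> emeasure M {y\<in>space M. s y \<noteq> 0} \<noteq> \<infinity> \<and>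
      (\<integral>\<^sup>+x. ennreal \<bar>fs i x - s x\<bar> \<partial>M) < ennreal \<delta>"
  proof
    fix i show "\<exists>s. i < N \<longrightarrow> simple_function M s \<and> emeasure M {y\<in>space M. s y \<noteq> 0} \<noteq> \<infinity> \<and>
      (\<integral>\<^sup>+x. ennreal \<bar>fs i x - s x\<bar> \<partial>M) < ennreal \<delta>"
    proof (cases "i < N")
      case True
      obtain s where "simple_function M s" "emeasure M {y\<in>space M. s y \<noteq> 0} \<noteq> \<infinity>"
        "(\<integral>\<^sup>+x. ennreal \<bar>fs i x - s x\<bar> \<partial>M) < ennreal \<delta>"
        using simple_approx[OF fi[OF True] d] by blast
      then show ?thesis by blast
    qed simp
  qed
  obtain sa where saH: "\<forall>i. i < N \<longrightarrow> simple_function M (sa i) \<and> emeasure M {y\<in>space M. sa i y \<noteq> 0} \<noteq> \<infinity> \<and>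
      (\<integral>\<^sup>+x. ennreal \<bar>fs i x - sa i x\<bar> \<partial>M) < ennreal \<delta>"
    using choice[OF exS] by blast
  have sa: "\<And>i. i < N \<Longrightarrow> simple_function M (sa i)"
    "\<And>i. i < N \<Longrightarrow> emeasure M {y\<in>space M. sa i y \<noteq> 0} \<noteq> \<infinity>"
    "\<And>i. i < N \<Longrightarrow> (\<integral>\<^sup>+x. ennreal \<bar>fs i x - sa i x\<bar> \<partial>M) < ennreal \<delta>"
    using saH by simp_all
  have sai: "i < N \<Longrightarrow> integrable M (sa i)" for i by (rule simple_int[OF sa(1) sa(2)])
  have exT: "\<forall>i. \<exists>s. i < N \<longrightarrow> simple_function M s \<and> emeasure M {y\<in>space M. s y \<noteq> 0} \<noteq> \<infinity> \<and>
      (\<integral>\<^sup>+x. ennreal \<bar>S (sa i) x - s x\<bar> \<partial>M) < ennreal \<delta>"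
  proof
    fix i show "\<exists>s. i < N \<longrightarrow> simple_function M s \<and> emeasure M {y\<in>space M. s y \<noteq> 0} \<noteq> \<infinity> \<and>
      (\<integral>\<^sup>+x. ennreal \<bar>S (sa i) x - s x\<bar> \<partial>M) < ennreal \<delta>"
    proof (cases "i < N")
      case True
      obtain s where "simple_function M s" "emeasure M {y\<in>space M. s y \<noteq> 0} \<noteq> \<infinity>"
        "(\<integral>\<^sup>+x. ennreal \<bar>S (sa i) x - s x\<bar> \<partial>M) < ennreal \<delta>"
        using simple_approx[OF sdso_int[OF S sai[OF True]] d] by blast
      then show ?thesis by blast
    qed simp
  qed
  obtain ta where taH: "\<forall>i. i < N \<longrightarrow> simple_function M (ta i) \<and> emeasure M {y\<in>space M. ta i y \<noteq> 0} \<noteq> \<infinity> \<and>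
      (\<integral>\<^sup>+x. ennreal \<bar>S (sa i) x - ta i x\<bar> \<partial>M) < ennreal \<delta>"
    using choice[OF exT] by blast
  have ta: "\<And>i. i < N \<Longrightarrow> simple_function M (ta i)"
    "\<And>i. i < N \<Longrightarrow> emeasure M {y\<in>space M. ta i y \<noteq> 0} \<noteq> \<infinity>"
    "\<And>i. i < N \<Longrightarrow> (\<integral>\<^sup>+x. ennreal \<bar>S (sa i) x - ta i x\<bar> \<partial>M) < ennreal \<delta>"
    using taH by simp_all
  define r where "r i = (if i < N then sa i else ta (i - N))" for i
  have r1: "i < N + N \<Longrightarrow> simple_function M (r i)" for i
    using sa(1) ta(1) unfolding r_def by auto
  have r2: "i < N + N \<Longrightarrow> emeasure M {y\<in>space M. r i y \<noteq> 0} \<noteq> \<infinity>" for i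
    using sa(2) ta(2) unfolding r_def by auto
  obtain C \<gamma> n where cp: "cellp M C"
    and repH: "\<forall>i y. i < N + N \<longrightarrow> y \<in> space M \<longrightarrow> r i y = (\<Sum>j<n. \<gamma> i j * indicator (C j) y)"
    using mk_cells[where p="N + N" and s=r, OF sf r1 r2] by blast
  have rep: "\<And>i y. i < N + N \<Longrightarrow> y \<in> space M \<Longrightarrow> r i y = (\<Sum>j<n. \<gamma> i j * indicator (C j) y)"
    using repH by blast
  let ?K = "\<lambda>x y. kS M S C (cidx C x) (cidx C y)"
  have BS: "\<And>l. \<exists>B. \<forall>j. \<bar>kS M S C l j\<bar> \<le> B" using kS_bound[OF S cp] by blast
  show ?thesis
  proof (intro exI[of _ ?K] conjI allI impI)
    show "semi_doubly_stochastic_kernel M ?K" by (rule kS_sdsk[OF S cp])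
    fix c x
    show "integral_operator M ?K (\<lambda>y. \<Sum>i<N. c i * fs i y) x = (\<Sum>i<N. c i * integral_operator M ?K (fs i) x)"
      by (rule cell_op_sum[OF cp fi BS])
  next
    fix i assume i: "i < N"
    show "integral_operator M ?K (fs i) \<in> borel_measurable M" by (rule cell_op_meas[OF cp])
    have g: "\<And>y. y \<in> space M \<Longrightarrow> sa i y = (\<Sum>j<n. \<gamma> i j * indicator (C j) y)"
      using rep[of i] i unfolding r_def by simp
    have u: "\<And>y. y \<in> space M \<Longrightarrow> ta i y = (\<Sum>j<n. \<gamma> (N + i) j * indicator (C j) y)"
      using rep[of "N + i"] i unfolding r_def by simp
    have "(\<integral>\<^sup>+x. ennreal \<bar>integral_operator M ?K (fs i) x - S (fs i) x\<bar> \<partial>M) \<le> ennreal (4 * \<delta>)"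
      by (rule approx_err[OF S cp sf fi[OF i] g u]) (use d sa(3)[OF i] ta(3)[OF i] in auto)
    then show "(\<integral>\<^sup>+x. ennreal \<bar>integral_operator M ?K (fs i) x - S (fs i) x\<bar> \<partial>M) \<le> ennreal \<epsilon>"
      by (simp add: \<delta>_def)
  qed
qed

theorem theorem4p11:
  fixes M :: "'a measure" and S :: "('a \<Rightarrow> real) \<Rightarrow> ('a \<Rightarrow> real)"
    and F :: "('a \<Rightarrow> real) set"
  assumes "sigma_finite_measure M"
    and "semi_doubly_stochastic_op M S"
    and "finite_dim_L1_subspace M F"
  shows "\<exists>K :: nat \<Rightarrow> 'a \<Rightarrow> 'a \<Rightarrow> real.
           (\<forall>n. semi_doubly_stochastic_kernel M (K n)) \<and>
           (\<forall>f\<in>F. (\<lambda>n. \<integral>\<^sup>+x. ennreal \<bar>integral_operator M (K n) f x - S f x\<bar> \<partial>M)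
                     \<longlonglongrightarrow> 0)"
proof -
  note sf = assms(1) and S = assms(2)
  obtain N :: nat and fs :: "nat \<Rightarrow> 'a \<Rightarrow> real" where fiH: "\<forall>i<N. integrable M (fs i)"
    and F: "F = {(\<lambda>x. \<Sum>i<N. c i * fs i x) | c. True}"
    using assms(3) unfolding finite_dim_L1_subspace_def by blast
  have fi: "\<And>i. i < N \<Longrightarrow> integrable M (fs i)" using fiH by blast
  define P where "P n K \<longleftrightarrow> semi_doubly_stochastic_kernel M K \<and>
    (\<forall>c x. integral_operator M K (\<lambda>y. \<Sum>i<N. c i * fs i y) x = (\<Sum>i<N. c i * integral_operator M K (fs i) x)) \<and>
    (\<forall>i<N. integral_operator M K (fs i) \<in> borel_measurable M) \<and>
    (\<forall>i<N. (\<integral>\<^sup>+x. ennreal \<bar>integral_operator M K (fs i) x - S (fs i) x\<bar> \<partial>M) \<le> ennreal (inverse (real (Suc n))))"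
    for n K
  have "\<forall>n. \<exists>K. P n K"
  proof
    fix n
    have "0 < inverse (real (Suc n))" by simp
    from approx_main[where N=N and fs=fs, OF sf S fi this] show "\<exists>K. P n K" unfolding P_def by blast
  qed
  then obtain K where K: "\<And>n. P n (K n)" using choice by metis
  show ?thesis
  proof (intro exI[of _ K] conjI allI ballI)
    fix n show "semi_doubly_stochastic_kernel M (K n)" using K[of n] unfolding P_def by blast
  next
    fix f assume "f \<in> F"
    then obtain c where f: "f = (\<lambda>x. \<Sum>i<N. c i * fs i x)" using F by blast
    define Cc where "Cc = (\<Sum>i<N. \<bar>c i\<bar>)"
    have bound: "(\<integral>\<^sup>+x. ennreal \<bar>integral_operator M (K n) f x - S f x\<bar> \<partial>M) \<le> ennreal (Cc * inverse (real (Suc n)))" for n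
    proof -
      let ?I = "integral_operator M (K n)"
      let ?e = "inverse (real (Suc n))"
      have lin: "\<And>x. ?I f x = (\<Sum>i<N. c i * ?I (fs i) x)"
        using K[of n] unfolding P_def f by blast
      have meas: "\<And>i. i < N \<Longrightarrow> ?I (fs i) \<in> borel_measurable M"
        using K[of n] unfolding P_def by blast
      have err: "\<And>i. i < N \<Longrightarrow> (\<integral>\<^sup>+x. ennreal \<bar>?I (fs i) x - S (fs i) x\<bar> \<partial>M) \<le> ennreal ?e"
        using K[of n] unfolding P_def by blast
      have Sm: "\<And>i. i < N \<Longrightarrow> S (fs i) \<in> borel_measurable M"
        using sdso_int[OF S fi] by auto
      have Sf: "AE x in M. S f x = (\<Sum>i<N. c i * S (fs i) x)"
        unfolding f by (rule sdso_sum[OF S fi])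
      have "(\<integral>\<^sup>+x. ennreal \<bar>?I f x - S f x\<bar> \<partial>M)
          \<le> (\<integral>\<^sup>+x. (\<Sum>i<N. ennreal \<bar>c i\<bar> * ennreal \<bar>?I (fs i) x - S (fs i) x\<bar>) \<partial>M)"
      proof (rule nn_integral_mono_AE)
        from Sf show "AE x in M. ennreal \<bar>?I f x - S f x\<bar> \<le> (\<Sum>i<N. ennreal \<bar>c i\<bar> * ennreal \<bar>?I (fs i) x - S (fs i) x\<bar>)"
        proof eventually_elim
          case (elim x)
          have "\<bar>?I f x - S f x\<bar> = \<bar>\<Sum>i<N. c i * (?I (fs i) x - S (fs i) x)\<bar>"
            unfolding lin elim by (simp add: sum_subtractf right_diff_distrib)
          also have "\<dots> \<le> (\<Sum>i<N. \<bar>c i * (?I (fs i) x - S (fs i) x)\<bar>)" by (rule sum_abs)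
          also have "\<dots> = (\<Sum>i<N. \<bar>c i\<bar> * \<bar>?I (fs i) x - S (fs i) x\<bar>)" by (simp add: abs_mult)
          finally have "ennreal \<bar>?I f x - S f x\<bar> \<le> ennreal (\<Sum>i<N. \<bar>c i\<bar> * \<bar>?I (fs i) x - S (fs i) x\<bar>)"
            by (rule ennreal_leI)
          also have "\<dots> = (\<Sum>i<N. ennreal \<bar>c i\<bar> * ennreal \<bar>?I (fs i) x - S (fs i) x\<bar>)"
            by (simp add: ennreal_mult sum_ennreal[symmetric] del: sum_ennreal)
          finally show ?case .
        qed
      qed
      also have "\<dots> = (\<Sum>i<N. ennreal \<bar>c i\<bar> * (\<integral>\<^sup>+x. ennreal \<bar>?I (fs i) x - S (fs i) x\<bar> \<partial>M))"
        using meas Sm by (subst nn_integral_sum) (auto intro!: sum.cong nn_integral_cmult)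
      also have "\<dots> \<le> (\<Sum>i<N. ennreal \<bar>c i\<bar> * ennreal ?e)"
        using err by (intro sum_mono mult_left_mono) auto
      also have "\<dots> = ennreal (Cc * ?e)"
        unfolding Cc_def by (simp add: ennreal_mult sum_distrib_right sum_ennreal[symmetric] del: sum_ennreal)
      finally show ?thesis .
    qed
    have lim: "(\<lambda>n. ennreal (Cc * inverse (real (Suc n)))) \<longlonglongrightarrow> 0"
    proof -
      have "(\<lambda>n. Cc * inverse (real (Suc n))) \<longlonglongrightarrow> Cc * 0"
        by (intro tendsto_mult tendsto_const LIMSEQ_inverse_real_of_nat)
      then have "(\<lambda>n. ennreal (Cc * inverse (real (Suc n)))) \<longlonglongrightarrow> ennreal (Cc * 0)"
        by (rule tendsto_ennrealI)
      then show ?thesis by simp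
    qed
    show "(\<lambda>n. \<integral>\<^sup>+x. ennreal \<bar>integral_operator M (K n) f x - S f x\<bar> \<partial>M) \<longlonglongrightarrow> 0"
      by (rule tendsto_sandwich[OF _ _ tendsto_const lim]) (use bound in auto)
  qed
qed

end
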